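(* Let $p\in\mathbb{R}_m[\mathbf{x}]$ with $\mathbf{x}=(x_1,\dots,x_n)$. For every positive integer $d$, $p-B_d(p)+(1+C'_m+C_m)\frac{L(p)}{d}\binom{m+1}{3}n^m\in M_{2\lceil m/2\rceil}(\mathbf{g})$, where $\mathbf{g}=(g_1,\dots,g_n)$ with $g_i:=x_i(1-x_i)$.
   Context: $\mathbb{R}_m[\mathbf{x}]$ is the set of real polynomials of degree at most $m$. The $n$-variate Bernstein approximation of order $d$ is $B_d(p):=\sum_{\mathbf{k}\in\{0,\dots,d\}^n}p\left(\frac{k_1}{d},\dots,\frac{k_n}{d}\right)\prod_{i=1}^n\binom{d}{k_i}x_i^{k_i}(1-x_i)^{d-k_i}$. Writing $p=\sum_{\mathbf{k}}p_{\mathbf{k}}\mathbf{x}^{\mathbf{k}}$, $|\mathbf{k}|=\sum_ik_i$, $\mathbf{k}!=\prod_ik_i!$, define $L(p):=\max_{\mathbf{k}}|p_{\mathbf{k}}|\frac{\mathbf{k}!}{|\mathbf{k}|!}$. $\Sigma[\mathbf{x}]$ denotes sums of squares; $M_r(\mathbf{g}):=\{\sigma_0+\sum_{i=1}^n\sigma_i g_i:\ \sigma_i\in\Sigma[\mathbf{x}],\ \deg\sigma_0\le r,\ \deg(\sigma_ig_i)\le r\}$. For each positive integer $j$, $C_j\le1$ denotes a constant such that $\prod_{i=1}^j x_i+C_j\in M_{2\lceil j/2\rceil}(g_1,\dots,g_j)$ (with $C_1:=0$), and $C'_j:=\sum_{i=1}^j C_i$. *)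

theory Defs
  imports "HOL-Analysis.Analysis" "HOL-Library.Poly_Mapping"
begin

text \<open>Real multivariate polynomials: monomials are finitely supported exponent vectors
  (variable x_(i+1) of the paper is variable index i here), a polynomial maps
  monomials to real coefficients with finite support.\<close>

type_synonym mpoly = "(nat \<Rightarrow>\<^sub>0 nat) \<Rightarrow>\<^sub>0 real"

definition mvar :: "nat \<Rightarrow> mpoly" where
  "mvar i = Poly_Mapping.single (Poly_Mapping.single i 1) 1"

definition mconst :: "real \<Rightarrow> mpoly" where
  "mconst c = Poly_Mapping.single 0 c"

definition mon_deg :: "(nat \<Rightarrow>\<^sub>0 nat) \<Rightarrow> nat" where
  "mon_deg k = (\<Sum>i\<in>Poly_Mapping.keys k. Poly_Mapping.lookup k i)"

definition mon_fact :: "(nat \<Rightarrow>\<^sub>0 nat) \<Rightarrow> real" where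
  "mon_fact k = (\<Prod>i\<in>Poly_Mapping.keys k. fact (Poly_Mapping.lookup k i))"

text \<open>total degree of a polynomial (the zero polynomial gets degree 0)\<close>
definition mdegree :: "mpoly \<Rightarrow> nat" where
  "mdegree p = Max (insert 0 (mon_deg ` Poly_Mapping.keys p))"

definition in_vars :: "nat \<Rightarrow> mpoly \<Rightarrow> bool" where
  "in_vars n p \<longleftrightarrow> (\<forall>k\<in>Poly_Mapping.keys p. Poly_Mapping.keys k \<subseteq> {..<n})"

definition meval :: "mpoly \<Rightarrow> (nat \<Rightarrow> real) \<Rightarrow> real" where
  "meval p x = (\<Sum>k\<in>Poly_Mapping.keys p. Poly_Mapping.lookup p k * (\<Prod>i\<in>Poly_Mapping.keys k. x i ^ Poly_Mapping.lookup k i))"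

definition bernstein :: "nat \<Rightarrow> nat \<Rightarrow> mpoly \<Rightarrow> mpoly" where
  "bernstein n d p =
     (\<Sum>k\<in>PiE {..<n} (\<lambda>_. {..d}).
        mconst (meval p (\<lambda>i. if i < n then real (k i) / real d else 0)) *
        (\<Prod>i<n. mconst (real (d choose k i)) * mvar i ^ k i * (1 - mvar i) ^ (d - k i)))"

definition Lnorm :: "mpoly \<Rightarrow> real" where
  "Lnorm p = Max (insert 0 ((\<lambda>k. \<bar>Poly_Mapping.lookup p k\<bar> * mon_fact k / fact (mon_deg k)) ` Poly_Mapping.keys p))"

definition sos :: "nat \<Rightarrow> mpoly \<Rightarrow> bool" where
  "sos n s \<longleftrightarrow> (\<exists>qs. (\<forall>q\<in>set qs. in_vars n q) \<and> s = sum_list (map (\<lambda>q. q * q) qs))"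

definition qmodule :: "nat \<Rightarrow> nat \<Rightarrow> (nat \<Rightarrow> mpoly) \<Rightarrow> mpoly set" where
  "qmodule n r g = {p. \<exists>s0 s. sos n s0 \<and> mdegree s0 \<le> r \<and>
       (\<forall>i<n. sos n (s i) \<and> mdegree (s i * g i) \<le> r) \<and>
       p = s0 + (\<Sum>i<n. s i * g i)}"

definition gbox :: "nat \<Rightarrow> mpoly" where
  "gbox i = mvar i * (1 - mvar i)"

end

theory Submission
  imports Defs "HOL-Combinatorics.Stirling"
begin


lemma mconst_mult: "mconst a * mconst b = mconst (a*b)" unfolding mconst_def by (simp add: mult_single)
lemma mconst_add: "mconst (a+b) = mconst a + mconst b" unfolding mconst_def by (simp add: single_add)
lemma mconst_diff: "mconst (a-b) = mconst a - mconst b" unfolding mconst_def by (simp add: single_diff)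
lemma mconst_uminus: "mconst (-a) = - mconst a" unfolding mconst_def by (simp add: single_uminus)
lemma mconst_0[simp]: "mconst 0 = 0" unfolding mconst_def by simp
lemma mconst_1[simp]: "mconst 1 = 1" unfolding mconst_def by simp
lemma mconst_sum: "mconst (sum f A) = (\<Sum>a\<in>A. mconst (f a))"
  by (induction A rule: infinite_finite_induct) (auto simp: mconst_add)
lemma mconst_prod: "mconst (prod f A) = (\<Prod>a\<in>A. mconst (f a))"
  by (induction A rule: infinite_finite_induct) (auto simp: mconst_mult[symmetric])
lemma mconst_power: "mconst (a^k) = mconst a ^ k" by (induction k) (auto simp: mconst_mult[symmetric])
lemma mconst_of_nat: "mconst (of_nat k) = of_nat k" unfolding mconst_def by simp

definition mon :: "(nat \<Rightarrow> 'a::comm_ring_1) \<Rightarrow> (nat \<Rightarrow>\<^sub>0 nat) \<Rightarrow> 'a" where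
  "mon v k = (\<Prod>i\<in>Poly_Mapping.keys k. v i ^ Poly_Mapping.lookup k i)"

definition gev :: "(real \<Rightarrow> 'a::comm_ring_1) \<Rightarrow> (nat \<Rightarrow> 'a) \<Rightarrow> mpoly \<Rightarrow> 'a" where
  "gev c v p = (\<Sum>k\<in>Poly_Mapping.keys p. c (Poly_Mapping.lookup p k) * mon v k)"

lemma mon_superset: "finite S \<Longrightarrow> Poly_Mapping.keys k \<subseteq> S \<Longrightarrow>
   mon v k = (\<Prod>i\<in>S. v i ^ Poly_Mapping.lookup k i)"
  unfolding mon_def by (rule prod.mono_neutral_left) (auto simp: in_keys_iff)

lemma mon_add: "mon v (k + l) = mon v k * mon v l"
proof -
  let ?S = "Poly_Mapping.keys k \<union> Poly_Mapping.keys l"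
  have "mon v (k+l) = (\<Prod>i\<in>?S. v i ^ Poly_Mapping.lookup (k+l) i)"
    by (rule mon_superset) (use keys_add[of k l] in auto)
  also have "\<dots> = (\<Prod>i\<in>?S. v i ^ Poly_Mapping.lookup k i) * (\<Prod>i\<in>?S. v i ^ Poly_Mapping.lookup l i)"
    by (simp add: lookup_add power_add prod.distrib)
  also have "\<dots> = mon v k * mon v l"
    by (simp add: mon_superset[symmetric])
  finally show ?thesis .
qed

lemma mon_zero[simp]: "mon v 0 = 1" unfolding mon_def by simp

lemma mon_single[simp]: "mon v (Poly_Mapping.single i e) = v i ^ e"
  unfolding mon_def by auto

lemma poly_expand: "(p::'a \<Rightarrow>\<^sub>0 'b::comm_monoid_add) = (\<Sum>k\<in>Poly_Mapping.keys p. Poly_Mapping.single k (Poly_Mapping.lookup p k))"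
proof (rule poly_mapping_eqI)
  fix k'
  have "Poly_Mapping.lookup (\<Sum>k\<in>Poly_Mapping.keys p. Poly_Mapping.single k (Poly_Mapping.lookup p k)) k'
     = (\<Sum>k\<in>Poly_Mapping.keys p. (if k = k' then Poly_Mapping.lookup p k else 0))"
    by (simp add: lookup_sum lookup_single when_def)
  also have "\<dots> = Poly_Mapping.lookup p k'"
    by (simp add: sum.delta' in_keys_iff)
  finally show "Poly_Mapping.lookup p k' = Poly_Mapping.lookup (\<Sum>k\<in>Poly_Mapping.keys p. Poly_Mapping.single k (Poly_Mapping.lookup p k)) k'" by simp
qed

locale chom =
  fixes c :: "real \<Rightarrow> 'a::comm_ring_1"
  assumes c0: "c 0 = 0" and c1: "c 1 = 1"
    and cadd: "\<And>a b. c (a+b) = c a + c b" and cmult: "\<And>a b. c (a*b) = c a * c b"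
begin

lemma gev_superset: "finite S \<Longrightarrow> Poly_Mapping.keys p \<subseteq> S \<Longrightarrow>
  gev c v p = (\<Sum>k\<in>S. c (Poly_Mapping.lookup p k) * mon v k)"
  unfolding gev_def by (rule sum.mono_neutral_left) (auto simp: in_keys_iff c0)

lemma gev_add: "gev c v (p + q) = gev c v p + gev c v q"
proof -
  let ?S = "Poly_Mapping.keys p \<union> Poly_Mapping.keys q"
  have "gev c v (p+q) = (\<Sum>k\<in>?S. c (Poly_Mapping.lookup (p+q) k) * mon v k)"
    by (rule gev_superset) (use keys_add[of p q] in auto)
  also have "\<dots> = (\<Sum>k\<in>?S. c (Poly_Mapping.lookup p k) * mon v k) + (\<Sum>k\<in>?S. c (Poly_Mapping.lookup q k) * mon v k)"
    by (simp add: lookup_add cadd distrib_right sum.distrib)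
  also have "\<dots> = gev c v p + gev c v q"
    by (simp add: gev_superset[symmetric])
  finally show ?thesis .
qed

lemma gev_zero[simp]: "gev c v 0 = 0" unfolding gev_def by simp

lemma gev_uminus: "gev c v (- p) = - gev c v p"
  using gev_add[where p="-p" and q=p] by (simp add: eq_neg_iff_add_eq_0)

lemma gev_diff: "gev c v (p - q) = gev c v p - gev c v q"
  using gev_add[where p=p and q="-q"] gev_uminus[where p=q] by simp

lemma gev_single: "gev c v (Poly_Mapping.single k a) = c a * mon v k"
  unfolding gev_def by (auto simp: c0)

lemma gev_sum: "gev c v (sum f A) = (\<Sum>a\<in>A. gev c v (f a))"
  by (induction A rule: infinite_finite_induct) (auto simp: gev_add)

lemma gev_mult: "gev c v (p * q) = gev c v p * gev c v q"
proof -
  have "p * q = (\<Sum>k\<in>Poly_Mapping.keys p. Poly_Mapping.single k (Poly_Mapping.lookup p k))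
     * (\<Sum>l\<in>Poly_Mapping.keys q. Poly_Mapping.single l (Poly_Mapping.lookup q l))"
    using poly_expand[of p] poly_expand[of q] by simp
  also have "\<dots> = (\<Sum>k\<in>Poly_Mapping.keys p. \<Sum>l\<in>Poly_Mapping.keys q.
        Poly_Mapping.single (k+l) (Poly_Mapping.lookup p k * Poly_Mapping.lookup q l))"
    by (simp add: sum_product mult_single)
  finally have "gev c v (p*q) = (\<Sum>k\<in>Poly_Mapping.keys p. \<Sum>l\<in>Poly_Mapping.keys q.
        c (Poly_Mapping.lookup p k) * mon v k * (c (Poly_Mapping.lookup q l) * mon v l))"
    by (simp add: gev_sum gev_single cmult mon_add mult_ac)
  also have "\<dots> = gev c v p * gev c v q"
    unfolding gev_def by (simp add: sum_product)
  finally show ?thesis .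
qed

lemma gev_one[simp]: "gev c v 1 = 1"
  using gev_single[where k=0 and a=1] by (simp add: c1)

lemma gev_mconst[simp]: "gev c v (mconst a) = c a"
  unfolding mconst_def by (simp add: gev_single)

lemma gev_mvar[simp]: "gev c v (mvar i) = v i"
  unfolding mvar_def by (simp add: gev_single c1)

lemma gev_power: "gev c v (p ^ k) = gev c v p ^ k"
  by (induction k) (auto simp: gev_mult)

lemma gev_prod: "gev c v (prod f A) = (\<Prod>a\<in>A. gev c v (f a))"
  by (induction A rule: infinite_finite_induct) (auto simp: gev_mult)

end

interpretation rid: chom "\<lambda>a::real. a" by unfold_locales auto
interpretation rconst: chom mconst by unfold_locales (auto simp: mconst_add mconst_mult)

lemma meval_gev: "meval p x = gev (\<lambda>a. a) x p"
  unfolding meval_def gev_def mon_def by simp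

lemma mvar_power: "mvar i ^ e = Poly_Mapping.single (Poly_Mapping.single i e) 1"
  unfolding mvar_def by (induction e) (auto simp: mult_single single_add[symmetric] add.commute)

lemma prod_single_mon: "finite A \<Longrightarrow> (\<Prod>i\<in>A. Poly_Mapping.single (f i) (1::real)) = Poly_Mapping.single (\<Sum>i\<in>A. f i) 1"
  by (induction A rule: finite_induct) (auto simp: mult_single)

lemma mon_mvar: "mon mvar k = Poly_Mapping.single k 1"
proof -
  have "mon mvar k = (\<Prod>i\<in>Poly_Mapping.keys k. Poly_Mapping.single (Poly_Mapping.single i (Poly_Mapping.lookup k i)) (1::real))"
    unfolding mon_def by (simp add: mvar_power)
  also have "\<dots> = Poly_Mapping.single (\<Sum>i\<in>Poly_Mapping.keys k. Poly_Mapping.single i (Poly_Mapping.lookup k i)) 1"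
    by (simp add: prod_single_mon)
  also have "\<dots> = Poly_Mapping.single k 1" using poly_expand[of k] by simp
  finally show ?thesis .
qed

lemma gev_id: "gev mconst mvar p = p"
proof -
  have "gev mconst mvar p = (\<Sum>k\<in>Poly_Mapping.keys p. Poly_Mapping.single k (Poly_Mapping.lookup p k))"
    unfolding gev_def mon_mvar mconst_def by (simp add: mult_single)
  then show ?thesis using poly_expand[of p] by simp
qed



definition dle :: "nat \<Rightarrow> mpoly \<Rightarrow> bool" where
  "dle r p \<longleftrightarrow> (\<forall>k\<in>Poly_Mapping.keys p. mon_deg k \<le> r)"

lemma mdegree_le_iff: "mdegree p \<le> r \<longleftrightarrow> dle r p"
  unfolding mdegree_def dle_def by (subst Max_le_iff) auto

lemma mon_deg_superset: "finite S \<Longrightarrow> Poly_Mapping.keys k \<subseteq> S \<Longrightarrow>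
   mon_deg k = (\<Sum>i\<in>S. Poly_Mapping.lookup k i)"
  unfolding mon_deg_def by (rule sum.mono_neutral_left) (auto simp: in_keys_iff)

lemma mon_deg_add: "mon_deg (k + l) = mon_deg k + mon_deg l"
proof -
  let ?S = "Poly_Mapping.keys k \<union> Poly_Mapping.keys l"
  have "mon_deg (k+l) = (\<Sum>i\<in>?S. Poly_Mapping.lookup (k+l) i)"
    by (rule mon_deg_superset) (use keys_add[of k l] in auto)
  also have "\<dots> = (\<Sum>i\<in>?S. Poly_Mapping.lookup k i) + (\<Sum>i\<in>?S. Poly_Mapping.lookup l i)"
    by (simp add: lookup_add sum.distrib)
  also have "\<dots> = mon_deg k + mon_deg l"
    by (simp add: mon_deg_superset[symmetric])
  finally show ?thesis .
qed

lemma mon_deg_single[simp]: "mon_deg (Poly_Mapping.single i e) = e"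
  unfolding mon_deg_def by auto

lemma mon_deg_zero[simp]: "mon_deg 0 = 0"
  unfolding mon_deg_def by auto

lemma dle_add: "dle r p \<Longrightarrow> dle r q \<Longrightarrow> dle r (p+q)"
  unfolding dle_def using keys_add[of p q] by blast
lemma dle_uminus[simp]: "dle r (-p) = dle r p"
  unfolding dle_def by simp
lemma dle_diff: "dle r p \<Longrightarrow> dle r q \<Longrightarrow> dle r (p-q)"
  unfolding dle_def using keys_diff[of p q] by blast
lemma dle_mono: "r \<le> s \<Longrightarrow> dle r p \<Longrightarrow> dle s p"
  unfolding dle_def by force
lemma dle_mult: "dle r p \<Longrightarrow> dle s q \<Longrightarrow> dle (r+s) (p*q)"
  unfolding dle_def using keys_mult[of p q] by (force simp: mon_deg_add intro: add_mono)
lemma dle_mconst[simp]: "dle r (mconst a)"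
  unfolding dle_def mconst_def by auto
lemma dle_mvar: "dle 1 (mvar i)"
  unfolding dle_def mvar_def by auto
lemma dle_one[simp]: "dle r 1"
  unfolding dle_def by auto
lemma dle_zero[simp]: "dle r 0"
  unfolding dle_def by auto
lemma dle_power: "dle r p \<Longrightarrow> dle (k*r) (p^k)"
  by (induction k) (auto dest: dle_mult)
lemma dle_sum: "(\<And>a. a \<in> A \<Longrightarrow> dle r (f a)) \<Longrightarrow> dle r (sum f A)"
  by (induction A rule: infinite_finite_induct) (auto intro: dle_add)
lemma dle_prod: "(\<And>a. a \<in> A \<Longrightarrow> dle (r a) (f a)) \<Longrightarrow> dle (sum r A) (prod f A)"
  by (induction A rule: infinite_finite_induct) (auto dest: dle_mult)

lemma iv_add: "in_vars n p \<Longrightarrow> in_vars n q \<Longrightarrow> in_vars n (p+q)"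
  unfolding in_vars_def using keys_add[of p q] by blast
lemma iv_uminus[simp]: "in_vars n (-p) = in_vars n p"
  unfolding in_vars_def by simp
lemma iv_diff: "in_vars n p \<Longrightarrow> in_vars n q \<Longrightarrow> in_vars n (p-q)"
  unfolding in_vars_def using keys_diff[of p q] by blast
lemma keys_add_nat: "Poly_Mapping.keys ((a::nat \<Rightarrow>\<^sub>0 nat) + b) = Poly_Mapping.keys a \<union> Poly_Mapping.keys b"
  by (auto simp: in_keys_iff lookup_add)
lemma iv_mult: "in_vars n p \<Longrightarrow> in_vars n q \<Longrightarrow> in_vars n (p*q)"
  unfolding in_vars_def using keys_mult[of p q] by (force simp: keys_add_nat)
lemma iv_mconst[simp]: "in_vars n (mconst a)"
  unfolding in_vars_def mconst_def by auto
lemma iv_mvar: "i < n \<Longrightarrow> in_vars n (mvar i)"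
  unfolding in_vars_def mvar_def by auto
lemma iv_one[simp]: "in_vars n 1"
  unfolding in_vars_def by auto
lemma iv_zero[simp]: "in_vars n 0"
  unfolding in_vars_def by auto
lemma iv_power: "in_vars n p \<Longrightarrow> in_vars n (p^k)"
  by (induction k) (auto intro: iv_mult)
lemma iv_sum: "(\<And>a. a \<in> A \<Longrightarrow> in_vars n (f a)) \<Longrightarrow> in_vars n (sum f A)"
  by (induction A rule: infinite_finite_induct) (auto intro: iv_add)
lemma iv_prod: "(\<And>a. a \<in> A \<Longrightarrow> in_vars n (f a)) \<Longrightarrow> in_vars n (prod f A)"
  by (induction A rule: infinite_finite_induct) (auto intro: iv_mult)

lemma sos_zero[simp]: "sos n 0"
  unfolding sos_def by (rule exI[of _ "[]"]) auto
lemma sos_add: "sos n a \<Longrightarrow> sos n b \<Longrightarrow> sos n (a+b)"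
  unfolding sos_def apply (elim exE conjE)
  subgoal for qs rs by (rule exI[of _ "qs @ rs"]) auto
  done
lemma sos_sq: "in_vars n q \<Longrightarrow> sos n (q*q)"
  unfolding sos_def by (rule exI[of _ "[q]"]) auto
lemma sum_list_mult_sq: "q * q * sum_list (map (\<lambda>q. q*q) qs) = sum_list (map (\<lambda>x. x*x) (map (\<lambda>x. q*x) qs))"
  for q :: mpoly by (induction qs) (auto simp: algebra_simps)
lemma sos_mult_sq: "in_vars n q \<Longrightarrow> sos n s \<Longrightarrow> sos n (q * q * s)"
  unfolding sos_def apply (elim exE conjE)
  subgoal for qs by (rule exI[of _ "map (\<lambda>x. q*x) qs"]) (auto simp: sum_list_mult_sq intro: iv_mult)
  done

abbreviation Q :: "nat \<Rightarrow> nat \<Rightarrow> mpoly set" where "Q n r \<equiv> qmodule n r gbox"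

lemma Q_iff: "a \<in> Q n r \<longleftrightarrow> (\<exists>s0 s. sos n s0 \<and> dle r s0 \<and>
       (\<forall>i<n. sos n (s i) \<and> dle r (s i * gbox i)) \<and> a = s0 + (\<Sum>i<n. s i * gbox i))"
  unfolding qmodule_def mdegree_le_iff by simp

lemma Q_sos: "sos n s \<Longrightarrow> dle r s \<Longrightarrow> s \<in> Q n r"
  unfolding Q_iff by (rule exI[of _ s], rule exI[of _ "\<lambda>_. 0"]) auto

lemma Q_zero[simp]: "0 \<in> Q n r"
  by (rule Q_sos) auto

lemma Q_add: assumes "a \<in> Q n r" "b \<in> Q n r" shows "a + b \<in> Q n r"
proof -
  from assms(1) obtain s0 s where A: "sos n s0" "dle r s0" "\<forall>i<n. sos n (s i) \<and> dle r (s i * gbox i)"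
     "a = s0 + (\<Sum>i<n. s i * gbox i)" unfolding Q_iff by blast
  from assms(2) obtain t0 t where B: "sos n t0" "dle r t0" "\<forall>i<n. sos n (t i) \<and> dle r (t i * gbox i)"
     "b = t0 + (\<Sum>i<n. t i * gbox i)" unfolding Q_iff by blast
  have "a + b = (s0 + t0) + (\<Sum>i<n. (s i + t i) * gbox i)"
    using A(4) B(4) by (simp add: distrib_right sum.distrib algebra_simps)
  moreover have "\<forall>i<n. sos n (s i + t i) \<and> dle r ((s i + t i) * gbox i)"
    using A(3) B(3) by (auto simp: distrib_right intro: sos_add dle_add)
  ultimately show ?thesis unfolding Q_iff using A B
    by (intro exI[of _ "s0+t0"] exI[of _ "\<lambda>i. s i + t i"]) (simp add: sos_add dle_add)
qed

lemma Q_sum: "(\<And>a. a \<in> A \<Longrightarrow> f a \<in> Q n r) \<Longrightarrow> sum f A \<in> Q n r"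
  by (induction A rule: infinite_finite_induct) (auto intro: Q_add)

lemma Q_mono: assumes "r \<le> r'" "a \<in> Q n r" shows "a \<in> Q n r'"
proof -
  from assms(2) obtain s0 s where A: "sos n s0" "dle r s0" "\<forall>i<n. sos n (s i) \<and> dle r (s i * gbox i)"
     "a = s0 + (\<Sum>i<n. s i * gbox i)" unfolding Q_iff by blast
  show ?thesis unfolding Q_iff using A dle_mono[OF assms(1)]
    by (intro exI[of _ s0] exI[of _ s]) simp
qed

lemma Q_mult_sq: assumes "a \<in> Q n r" "in_vars n q" "dle t q" shows "q*q*a \<in> Q n (r + 2*t)"
proof -
  from assms(1) obtain s0 s where A: "sos n s0" "dle r s0" "\<forall>i<n. sos n (s i) \<and> dle r (s i * gbox i)"
     "a = s0 + (\<Sum>i<n. s i * gbox i)" unfolding Q_iff by blast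
  have qq: "dle (2*t) (q*q)" using dle_mult[OF assms(3) assms(3)] by (simp add: mult_2)
  have "q*q*a = q * q * s0 + (\<Sum>i<n. (q * q * s i) * gbox i)"
    using A(4) by (simp add: distrib_left sum_distrib_left mult.assoc)
  moreover have "\<forall>i<n. sos n (q * q * s i) \<and> dle (r+2*t) ((q * q * s i) * gbox i)"
  proof (intro allI impI conjI)
    fix i assume i: "i<n"
    then show "sos n (q * q * s i)" using A(3) assms(2) sos_mult_sq by blast
    have "dle (2*t + r) (q * q * (s i * gbox i))" using dle_mult[OF qq] A(3) i by blast
    then show "dle (r+2*t) ((q * q * s i) * gbox i)" by (simp add: mult.assoc add.commute)
  qed
  moreover have "dle (r+2*t) (q * q * s0)" using dle_mult[OF qq A(2)] by (simp add: add.commute)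
  ultimately show ?thesis unfolding Q_iff using A assms(2)
    by (intro exI[of _ "q * q * s0"] exI[of _ "\<lambda>i. q * q * s i"]) (simp add: sos_mult_sq)
qed

lemma sqrt_sq_mconst: "c \<ge> 0 \<Longrightarrow> mconst (sqrt c) * mconst (sqrt c) = mconst c"
  by (simp add: mconst_mult)

lemma Q_scale: assumes "c \<ge> 0" "a \<in> Q n r" shows "mconst c * a \<in> Q n r"
  using Q_mult_sq[OF assms(2), of "mconst (sqrt c)" 0] assms(1) by (simp add: sqrt_sq_mconst)

lemma Q_sq: "in_vars n q \<Longrightarrow> dle t q \<Longrightarrow> 2*t \<le> r \<Longrightarrow> q*q \<in> Q n r"
  by (rule Q_sos) (auto intro: sos_sq dle_mono[OF _ dle_mult] simp: mult_2)

lemma Q_const: "c \<ge> 0 \<Longrightarrow> mconst c \<in> Q n r"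
  using Q_sq[of n "mconst (sqrt c)" 0 r] by (simp add: sqrt_sq_mconst)

lemma dle_gbox: "dle 2 (gbox i)"
  unfolding gbox_def using dle_mult[OF dle_mvar[of i] dle_diff[OF dle_one dle_mvar[of i]]] by (simp add: numeral_2_eq_2)

lemma iv_gbox: "i < n \<Longrightarrow> in_vars n (gbox i)"
  unfolding gbox_def by (auto intro!: iv_mult iv_diff iv_mvar)

lemma Q_g: assumes "i < n" "2 \<le> r" "c \<ge> 0" shows "mconst c * gbox i \<in> Q n r"
proof -
  let ?s = "\<lambda>l. if l = i then mconst c else 0"
  have eq: "mconst c * gbox i = 0 + (\<Sum>l<n. ?s l * gbox l)"
  proof -
    have "(\<Sum>l<n. ?s l * gbox l) = (\<Sum>l<n. if l = i then mconst c * gbox l else 0)"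
      by (rule sum.cong) simp_all
    also have "\<dots> = mconst c * gbox i" using assms(1) sum.delta[of "{..<n}" i "\<lambda>l. mconst c * gbox l"] by simp
    finally show ?thesis by simp
  qed
  have "sos n (mconst c)"
    using sos_sq[of n "mconst (sqrt c)"] assms(3) by (simp add: sqrt_sq_mconst)
  moreover have "dle r (mconst c * gbox l)" for l
    using dle_mono[OF _ dle_mult[OF dle_mconst[of 0 c] dle_gbox[of l]]] assms(2) by simp
  ultimately have "\<forall>l<n. sos n (?s l) \<and> dle r (?s l * gbox l)"
    by auto
  then show ?thesis unfolding Q_iff using eq by (intro exI[of _ 0] exI[of _ ?s]) simp
qed



definition Pm :: "nat \<Rightarrow> (nat \<Rightarrow> nat) \<Rightarrow> mpoly" where "Pm n e = (\<Prod>i<n. mvar i ^ e i)"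
definition edeg :: "nat \<Rightarrow> (nat \<Rightarrow> nat) \<Rightarrow> nat" where "edeg n e = (\<Sum>i<n. e i)"

lemma dle_Pm: "dle (edeg n e) (Pm n e)"
  unfolding Pm_def edeg_def by (rule dle_prod) (use dle_power[OF dle_mvar] in simp)

lemma iv_Pm: "in_vars n (Pm n e)"
  unfolding Pm_def by (auto intro!: iv_prod iv_power iv_mvar)

lemma Pm_add: "Pm n (\<lambda>i. a i + b i) = Pm n a * Pm n b"
  unfolding Pm_def by (simp add: power_add prod.distrib)

lemma edeg_add: "edeg n (\<lambda>i. a i + b i) = edeg n a + edeg n b"
  unfolding edeg_def by (simp add: sum.distrib)

lemma Pm_cong: "(\<And>i. i < n \<Longrightarrow> a i = b i) \<Longrightarrow> Pm n a = Pm n b"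
  unfolding Pm_def by (rule prod.cong) auto

lemma edeg_cong: "(\<And>i. i < n \<Longrightarrow> a i = b i) \<Longrightarrow> edeg n a = edeg n b"
  unfolding edeg_def by (rule sum.cong) auto

lemma Pm_dec: assumes "i < n" "h i > 0" shows "Pm n h = mvar i * Pm n (h(i := h i - 1))"
proof -
  have "Pm n h = mvar i ^ h i * (\<Prod>l\<in>{..<n}-{i}. mvar l ^ h l)"
    unfolding Pm_def using assms(1) by (simp add: prod.remove)
  moreover have "Pm n (h(i := h i - 1)) = mvar i ^ (h i - 1) * (\<Prod>l\<in>{..<n}-{i}. mvar l ^ h l)"
    unfolding Pm_def using assms(1) by (simp add: prod.remove)
  moreover have "mvar i ^ h i = mvar i * mvar i ^ (h i - 1)"
    using assms(2) by (metis Suc_diff_1 power_Suc)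
  ultimately show ?thesis by (simp add: mult.assoc)
qed

lemma edeg_dec: assumes "i < n" "h i > 0" shows "edeg n (h(i := h i - 1)) = edeg n h - 1"
proof -
  have "edeg n h = h i + (\<Sum>l\<in>{..<n}-{i}. h l)"
    unfolding edeg_def using assms(1) by (simp add: sum.remove)
  moreover have "edeg n (h(i := h i - 1)) = (h i - 1) + (\<Sum>l\<in>{..<n}-{i}. h l)"
    unfolding edeg_def using assms(1) by (simp add: sum.remove)
  ultimately show ?thesis using assms(2) by simp
qed

lemma Q_1m_sq_var: assumes "i < n" shows "1 - mvar i * mvar i \<in> Q n 2"
proof -
  have "1 - mvar i * mvar i = (1 - mvar i) * (1 - mvar i) + mconst 2 * gbox i"
    unfolding gbox_def mconst_def by (simp add: algebra_simps)
  moreover have "(1 - mvar i) * (1 - mvar i) \<in> Q n 2"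
    by (rule Q_sq[of _ _ 1]) (auto intro!: iv_diff iv_mvar assms dle_diff dle_mvar[unfolded One_nat_def])
  moreover have "mconst 2 * gbox i \<in> Q n 2" by (rule Q_g) (use assms in auto)
  ultimately show ?thesis by (simp add: Q_add)
qed

lemma Q_1m_Psq: "1 - Pm n h * Pm n h \<in> Q n (2 * edeg n h)"
proof (induction "edeg n h" arbitrary: h)
  case 0
  then have "\<forall>i<n. h i = 0" unfolding edeg_def by simp
  then have "Pm n h = 1" unfolding Pm_def by simp
  then show ?case by simp
next
  case (Suc N)
  then have "\<exists>i<n. h i > 0" unfolding edeg_def by (metis lessThan_iff not_gr_zero sum.neutral nat.distinct(1))
  then obtain i where i: "i < n" "h i > 0" by blast
  define h' where "h' = h(i := h i - 1)"
  have eN: "N = edeg n h'" unfolding h'_def using edeg_dec[of i n h, OF i] Suc(2) by simp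
  have P: "Pm n h = mvar i * Pm n h'" unfolding h'_def using Pm_dec[of i n h, OF i] .
  have "1 - Pm n h * Pm n h = (1 - mvar i * mvar i) + mvar i * mvar i * (1 - Pm n h' * Pm n h')"
    unfolding P by (simp add: algebra_simps)
  moreover have "1 - mvar i * mvar i \<in> Q n (2 * Suc N)"
    by (rule Q_mono[OF _ Q_1m_sq_var[OF i(1)]]) simp
  moreover have "mvar i * mvar i * (1 - Pm n h' * Pm n h') \<in> Q n (2 * N + 2 * 1)"
    by (rule Q_mult_sq) (use Suc(1)[OF eN] eN in \<open>auto intro: iv_mvar i dle_mvar[unfolded One_nat_def]\<close>)
  ultimately show ?case unfolding Suc(2)[symmetric] using Q_add
    by (metis add.commute mult_Suc_right nat_mult_1_right)
qed

lemma split_exists: "t \<le> edeg n e \<Longrightarrow> \<exists>e1. (\<forall>i. e1 i \<le> e i) \<and> edeg n e1 = t"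
proof (induction t)
  case 0
  then show ?case by (intro exI[of _ "\<lambda>_. 0"]) (simp add: edeg_def)
next
  case (Suc t)
  then obtain e1 where e1: "\<forall>i. e1 i \<le> e i" "edeg n e1 = t" by force
  have "\<exists>i<n. e1 i < e i"
  proof (rule ccontr)
    assume "\<not> ?thesis"
    then have "\<forall>i<n. e i \<le> e1 i" by (meson not_le)
    then have "edeg n e \<le> edeg n e1" unfolding edeg_def by (intro sum_mono) auto
    then show False using e1(2) Suc(2) by simp
  qed
  then obtain i where i: "i < n" "e1 i < e i" by blast
  define e2 where "e2 = e1(i := e1 i + 1)"
  have "edeg n e2 = e1 i + 1 + (\<Sum>l\<in>{..<n}-{i}. e1 l)"
    unfolding edeg_def e2_def using i(1) by (simp add: sum.remove)
  moreover have "edeg n e1 = e1 i + (\<Sum>l\<in>{..<n}-{i}. e1 l)"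
    unfolding edeg_def using i(1) by (simp add: sum.remove)
  ultimately have "edeg n e2 = Suc t" using e1(2) by simp
  moreover have "\<forall>l. e2 l \<le> e l" unfolding e2_def using e1(1) i(2) by auto
  ultimately show ?case by blast
qed

lemma minus_cert: assumes "edeg n e \<le> m" shows "1 - Pm n e \<in> Q n (2 * ((m+1) div 2))"
proof -
  obtain e1 where e1: "\<forall>i. e1 i \<le> e i" "edeg n e1 = edeg n e div 2"
    using split_exists[of "edeg n e div 2" n e] by auto
  define e2 where "e2 = (\<lambda>i. e i - e1 i)"
  have ee: "e = (\<lambda>i. e1 i + e2 i)" unfolding e2_def using e1(1) by (auto simp: fun_eq_iff)
  have deg2: "edeg n e2 = edeg n e - edeg n e1" using edeg_add[of n e1 e2] ee by simp
  let ?t = "(m+1) div 2"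
  have t1: "edeg n e1 \<le> ?t" "edeg n e2 \<le> ?t" using deg2 e1(2) assms by auto
  let ?a = "Pm n e1" and ?b = "Pm n e2"
  have "1 - Pm n e = mconst (1/2) * ((?a - ?b) * (?a - ?b)) + mconst (1/2) * (1 - ?a * ?a)
        + mconst (1/2) * (1 - ?b * ?b)"
  proof -
    have "Pm n e = ?a * ?b" by (subst ee) (rule Pm_add)
    moreover have "mconst (1/2) * 2 = 1"
    proof -
      have "mconst (1/2) * mconst 2 = 1" by (simp add: mconst_mult)
      moreover have "mconst 2 = 2" by (simp add: mconst_def)
      ultimately show ?thesis by simp
    qed
    ultimately show ?thesis by (simp add: algebra_simps)
  qed
  moreover have "(?a - ?b) * (?a - ?b) \<in> Q n (2 * ?t)"
    by (rule Q_sq[of _ _ ?t]) (use t1 in \<open>auto intro!: iv_diff iv_Pm dle_diff dle_mono[OF _ dle_Pm]\<close>)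
  moreover have "1 - ?a * ?a \<in> Q n (2 * ?t)" by (rule Q_mono[OF _ Q_1m_Psq]) (use t1 in simp)
  moreover have "1 - ?b * ?b \<in> Q n (2 * ?t)" by (rule Q_mono[OF _ Q_1m_Psq]) (use t1 in simp)
  ultimately show ?thesis by (simp add: Q_add Q_scale)
qed



lemma gev_sum_list: "gev c v (sum_list xs) = sum_list (map (gev c v) xs)" if "chom c" for c
  using that by (induction xs) (auto simp: chom.gev_add chom.gev_zero)

lemma sos_nonneg: assumes "sos n s" shows "0 \<le> gev (\<lambda>a. a) v s"
proof -
  from assms obtain qs where s: "s = sum_list (map (\<lambda>q. q*q) qs)" unfolding sos_def by blast
  have "gev (\<lambda>a. a) v s = sum_list (map (\<lambda>q. gev (\<lambda>a. a) v q * gev (\<lambda>a. a) v q) qs)"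
    unfolding s by (induction qs) (auto simp: rid.gev_add rid.gev_mult)
  also have "\<dots> \<ge> 0" by (rule sum_list_nonneg) auto
  finally show ?thesis .
qed

lemma Q_nonneg: assumes "a \<in> Q n r" "\<And>i. 0 \<le> v i * (1 - v i)" shows "0 \<le> gev (\<lambda>a. a) v a"
proof -
  from assms(1) obtain s0 s where A: "sos n s0" "\<forall>i<n. sos n (s i)"
     "a = s0 + (\<Sum>i<n. s i * gbox i)" unfolding Q_iff by blast
  have "gev (\<lambda>a. a) v a = gev (\<lambda>a. a) v s0 + (\<Sum>i<n. gev (\<lambda>a. a) v (s i) * (v i * (1 - v i)))"
    unfolding A(3) gbox_def by (simp add: rid.gev_add rid.gev_sum rid.gev_mult rid.gev_diff)
  also have "\<dots> \<ge> 0"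
  proof (intro add_nonneg_nonneg sum_nonneg)
    show "0 \<le> gev (\<lambda>a. a) v s0" using A(1) by (rule sos_nonneg)
    fix i assume "i \<in> {..<n}"
    then show "0 \<le> gev (\<lambda>a. a) v (s i) * (v i * (1 - v i))"
      using A(2) by (intro mult_nonneg_nonneg[OF sos_nonneg assms(2)]) auto
  qed
  finally show ?thesis .
qed

lemma C_nonneg: assumes "(\<Prod>i<j. mvar i) + mconst c \<in> Q j r" "j \<ge> 1" shows "c \<ge> 0"
proof -
  have "0 \<le> gev (\<lambda>a. a) (\<lambda>_. 0) ((\<Prod>i<j. mvar i) + mconst c)"
    by (rule Q_nonneg[OF assms(1)]) simp
  moreover have "gev (\<lambda>a. a) (\<lambda>_. 0::real) ((\<Prod>i<j. mvar i) + mconst c) = c"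
    using assms(2) by (simp add: rid.gev_add rid.gev_prod)
  ultimately show ?thesis by simp
qed

context
  fixes \<sigma> :: "nat \<Rightarrow> nat" and n :: nat
begin

abbreviation "ren \<equiv> gev mconst (\<lambda>i. mvar (\<sigma> i))"

lemma iv_ren: assumes "in_vars s q" "\<And>i. i < s \<Longrightarrow> \<sigma> i < n" shows "in_vars n (ren q)"
  unfolding gev_def mon_def
proof (intro iv_sum iv_mult iv_mconst iv_prod iv_power iv_mvar)
  fix k i assume "k \<in> Poly_Mapping.keys q" "i \<in> Poly_Mapping.keys k"
  then show "\<sigma> i < n" using assms unfolding in_vars_def by auto
qed

lemma dle_ren: assumes "dle r q" shows "dle r (ren q)"
  unfolding gev_def
proof (intro dle_sum)
  fix k assume k: "k \<in> Poly_Mapping.keys q"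
  have "dle (0 + mon_deg k) (mconst (Poly_Mapping.lookup q k) * mon (\<lambda>i. mvar (\<sigma> i)) k)"
    unfolding mon_def mon_deg_def
    by (intro dle_mult dle_mconst dle_prod) (use dle_power[OF dle_mvar] in simp)
  moreover have "mon_deg k \<le> r" using assms k unfolding dle_def by blast
  ultimately show "dle r (mconst (Poly_Mapping.lookup q k) * mon (\<lambda>i. mvar (\<sigma> i)) k)"
    using dle_mono by simp
qed

lemma sos_ren: assumes "sos s q" "\<And>i. i < s \<Longrightarrow> \<sigma> i < n" shows "sos n (ren q)"
proof -
  from assms(1) obtain qs where q: "\<forall>x\<in>set qs. in_vars s x" "q = sum_list (map (\<lambda>q. q*q) qs)"
    unfolding sos_def by blast
  have "ren q = sum_list (map (\<lambda>q. q*q) (map ren qs))"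
    unfolding q(2) by (induction qs) (auto simp: rconst.gev_add rconst.gev_mult)
  moreover have "\<forall>x\<in>set (map ren qs). in_vars n x" using q(1) iv_ren assms(2) by auto
  ultimately show ?thesis unfolding sos_def by blast
qed

end

lemma rename_cert:
  assumes S: "S \<subseteq> {..<n}" "card S = s" "s \<ge> 1"
    and cert: "(\<Prod>i<s. mvar i) + mconst c \<in> Q s r"
  shows "(\<Prod>i\<in>S. mvar i) + mconst c \<in> Q n r"
proof -
  have fin: "finite S" using S(1) finite_subset by blast
  obtain \<sigma> where bij: "bij_betw \<sigma> {..<s} S"
    using ex_bij_betw_nat_finite[OF fin] S(2) by (auto simp: lessThan_atLeast0)
  have sig: "\<sigma> i < n" if "i < s" for i using bij that S(1) unfolding bij_betw_def by auto
  let ?r = "gev mconst (\<lambda>i. mvar (\<sigma> i))"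
  from cert obtain s0 sf where A: "sos s s0" "dle r s0" "\<forall>i<s. sos s (sf i) \<and> dle r (sf i * gbox i)"
     "(\<Prod>i<s. mvar i) + mconst c = s0 + (\<Sum>i<s. sf i * gbox i)" unfolding Q_iff by blast
  have "?r ((\<Prod>i<s. mvar i) + mconst c) = (\<Prod>i\<in>S. mvar i) + mconst c"
    by (simp add: rconst.gev_add rconst.gev_prod prod.reindex_bij_betw[OF bij])
  define t where "t l = (if l \<in> S then ?r (sf (inv_into {..<s} \<sigma> l)) else 0)" for l
  have rg: "?r (gbox i) = gbox (\<sigma> i)" for i
    unfolding gbox_def by (simp add: rconst.gev_mult rconst.gev_diff)
  have tsig: "t (\<sigma> i) = ?r (sf i)" if "i < s" for i
    using bij that unfolding t_def bij_betw_def by (auto simp: inv_into_f_f)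
  have "?r (\<Sum>i<s. sf i * gbox i) = (\<Sum>i<s. t (\<sigma> i) * gbox (\<sigma> i))"
    by (simp add: rconst.gev_sum rconst.gev_mult rg tsig)
  also have "\<dots> = (\<Sum>l\<in>S. t l * gbox l)"
    by (rule sum.reindex_bij_betw[OF bij])
  also have "\<dots> = (\<Sum>l<n. t l * gbox l)"
    by (rule sum.mono_neutral_left) (use S(1) in \<open>auto simp: t_def\<close>)
  finally have eq: "(\<Prod>i\<in>S. mvar i) + mconst c = ?r s0 + (\<Sum>l<n. t l * gbox l)"
    using A(4) \<open>?r ((\<Prod>i<s. mvar i) + mconst c) = _\<close> by (simp add: rconst.gev_add)
  have "\<forall>l<n. sos n (t l) \<and> dle r (t l * gbox l)"
  proof (intro allI impI)
    fix l assume "l < n"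
    show "sos n (t l) \<and> dle r (t l * gbox l)"
    proof (cases "l \<in> S")
      case True
      then obtain i where i: "i < s" "l = \<sigma> i" using bij unfolding bij_betw_def by auto
      have "t l * gbox l = ?r (sf i * gbox i)" using i by (simp add: tsig rconst.gev_mult rg)
      then show ?thesis using A(3) i sos_ren sig dle_ren tsig by auto
    qed (auto simp: t_def)
  qed
  moreover have "sos n (?r s0)" using sos_ren[OF A(1)] sig by auto
  moreover have "dle r (?r s0)" using dle_ren[OF A(2)] .
  ultimately show ?thesis unfolding Q_iff using eq by blast
qed

lemma plus_cert:
  assumes Ccert: "\<And>j. j \<ge> 1 \<Longrightarrow> (\<Prod>i<j. mvar i) + mconst (C j) \<in> Q j (2 * ((j + 1) div 2))"
    and deg: "edeg n e \<le> m"
  shows "Pm n e + mconst (\<Sum>i=1..m. C i) \<in> Q n (2 * ((m+1) div 2))"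
proof -
  have Cnn: "C j \<ge> 0" if "j \<ge> 1" for j using C_nonneg[OF Ccert[OF that] that] .
  let ?Cp = "\<Sum>i=1..m. C i"
  have Cp: "?Cp \<ge> 0" using Cnn by (intro sum_nonneg) auto
  define h where "h i = e i div 2" for i
  define od where "od i = e i mod 2" for i
  have e: "e = (\<lambda>i. (\<lambda>i. h i + h i) i + od i)" unfolding h_def od_def by (auto simp: fun_eq_iff) presburger
  have Pe: "Pm n e = Pm n h * Pm n h * Pm n od"
    by (subst e, subst Pm_add, subst Pm_add) simp
  have De: "edeg n e = edeg n h + edeg n h + edeg n od"
    by (subst e, subst edeg_add, subst edeg_add) simp
  define S where "S = {i \<in> {..<n}. odd (e i)}"
  have PoS: "Pm n od = (\<Prod>i\<in>S. mvar i)"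
    unfolding Pm_def S_def by (subst prod.inter_filter) (auto simp: od_def odd_iff_mod_2_eq_one intro!: prod.cong)
  have cS: "card S = edeg n od"
    unfolding S_def edeg_def by (subst card_eq_sum, subst sum.inter_filter) (auto simp: od_def odd_iff_mod_2_eq_one intro!: sum.cong)
  have SS: "S \<subseteq> {..<n}" unfolding S_def by auto
  let ?r = "2 * ((m+1) div 2)"
  have hQ: "1 - Pm n h * Pm n h \<in> Q n ?r"
    by (rule Q_mono[OF _ Q_1m_Psq]) (use deg De in simp)
  show ?thesis
  proof (cases "edeg n od = 0")
    case True
    then have "S = {}" using cS SS finite_subset by fastforce
    then have "Pm n e = Pm n h * Pm n h" using Pe PoS by simp
    moreover have "Pm n h * Pm n h \<in> Q n ?r"
      by (rule Q_sq[of _ _ "edeg n h"]) (use deg De in \<open>auto intro: iv_Pm dle_Pm\<close>)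
    ultimately show ?thesis using Q_const[OF Cp] by (simp add: Q_add)
  next
    case False
    let ?s = "edeg n od"
    have s1: "?s \<ge> 1" "?s \<le> m" using False deg De by auto
    have R: "Pm n od + mconst (C ?s) \<in> Q n (2 * ((?s + 1) div 2))"
      unfolding PoS by (rule rename_cert[OF SS cS s1(1) Ccert[OF s1(1)]])
    have "Pm n h * Pm n h * (Pm n od + mconst (C ?s)) \<in> Q n (2 * ((?s + 1) div 2) + 2 * edeg n h)"
      by (rule Q_mult_sq[OF R iv_Pm dle_Pm])
    then have R2: "Pm n h * Pm n h * (Pm n od + mconst (C ?s)) \<in> Q n ?r"
      by (rule Q_mono[rotated]) (use deg De in presburger)
    have "C ?s \<le> ?Cp" using s1 Cnn by (intro member_le_sum) auto
    then have R3: "mconst (?Cp - C ?s) \<in> Q n ?r" by (intro Q_const) simp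
    have R4: "mconst (C ?s) * (1 - Pm n h * Pm n h) \<in> Q n ?r" using Cnn[OF s1(1)] hQ by (rule Q_scale)
    have "Pm n e + mconst ?Cp = Pm n h * Pm n h * (Pm n od + mconst (C ?s))
        + mconst (C ?s) * (1 - Pm n h * Pm n h) + mconst (?Cp - C ?s)"
      unfolding Pe mconst_diff by (simp add: algebra_simps)
    then show ?thesis using R2 R3 R4 by (simp add: Q_add)
  qed
qed



definition ff :: "nat \<Rightarrow> nat \<Rightarrow> real" where "ff t j = (\<Prod>l<j. real t - real l)"

lemma ff_0[simp]: "ff t 0 = 1" unfolding ff_def by simp
lemma ff_Suc: "ff t (Suc j) = ff t j * (real t - real j)" unfolding ff_def by simp
lemma ff_zero: "t < j \<Longrightarrow> ff t j = 0" unfolding ff_def by (rule prod_zero) auto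
lemma ff_nonneg: "ff t j \<ge> 0"
proof (cases "j \<le> t")
  case True then show ?thesis unfolding ff_def by (intro prod_nonneg) auto
qed (simp add: ff_zero)

lemma ff_fact: "j \<le> t \<Longrightarrow> ff t j * fact (t - j) = fact t"
proof (induction j)
  case (Suc j)
  then have "fact (t - j) = real (t - j) * fact (t - Suc j)"
    by (metis Suc_diff_le diff_Suc_Suc diff_zero fact_Suc le_less_Suc_eq not_less_eq_eq of_nat_fact)
  then show ?case using Suc by (simp add: ff_Suc of_nat_diff)
qed simp

lemma stirling_power: "real t ^ a = (\<Sum>j\<le>a. real (Stirling a j) * ff t j)"
proof (induction a)
  case 0 then show ?case by simp
next
  case (Suc a)
  have tf: "real t * ff t j = ff t (Suc j) + real j * ff t j" for j
    by (simp add: ff_Suc algebra_simps)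
  have "real t ^ Suc a = (\<Sum>j\<le>a. real (Stirling a j) * (real t * ff t j))"
    using Suc by (simp add: sum_distrib_left mult_ac)
  also have "\<dots> = (\<Sum>j\<le>a. real (Stirling a j) * ff t (Suc j)) + (\<Sum>j\<le>a. real j * real (Stirling a j) * ff t j)"
    by (simp add: tf distrib_left sum.distrib mult_ac)
  also have "(\<Sum>j\<le>a. real j * real (Stirling a j) * ff t j) = (\<Sum>j\<le>Suc a. real j * real (Stirling a j) * ff t j)"
    by simp
  also have "\<dots> = (\<Sum>j\<le>a. real (Suc j) * real (Stirling a (Suc j)) * ff t (Suc j))"
    by (subst sum.atMost_Suc_shift) simp
  finally have "real t ^ Suc a = (\<Sum>j\<le>a. real (Stirling (Suc a) (Suc j)) * ff t (Suc j))"
    by (simp add: sum.distrib[symmetric] algebra_simps)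
  also have "\<dots> = (\<Sum>j\<le>Suc a. real (Stirling (Suc a) j) * ff t j)"
    by (subst sum.atMost_Suc_shift) simp
  finally show ?case .
qed

lemma choose_ff: assumes "j + u \<le> d"
  shows "real (d choose (j+u)) * ff (j+u) j = ff d j * real ((d - j) choose u)"
proof -
  have a: "ff (j+u) j = fact (j+u) / fact u" using ff_fact[of j "j+u"] by (simp add: field_simps)
  have b: "ff d j = fact d / fact (d - j)" using ff_fact[of j d] assms by (simp add: field_simps)
  have c: "real (d choose (j+u)) = fact d / (fact (j+u) * fact (d - (j+u)))" using binomial_fact assms by blast
  have e: "real ((d - j) choose u) = fact (d-j) / (fact u * fact (d - (j + u)))" using binomial_fact[of u "d-j"] assms by (simp add: le_diff_conv2 add.commute)
  show ?thesis unfolding a b c e by (simp add: field_simps)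
qed

lemma bern_ff:
  fixes X :: mpoly
  shows "(\<Sum>t\<le>d. mconst (real (d choose t) * ff t j) * X^t * (1-X)^(d-t)) = mconst (ff d j) * X^j"
proof (cases "j \<le> d")
  case False
  then show ?thesis by (auto simp: ff_zero intro!: sum.neutral)
next
  case True
  have "(\<Sum>t\<le>d. mconst (real (d choose t) * ff t j) * X^t * (1-X)^(d-t))
      = (\<Sum>t\<in>{j..d}. mconst (real (d choose t) * ff t j) * X^t * (1-X)^(d-t))"
    by (rule sum.mono_neutral_right) (auto simp: ff_zero)
  also have "\<dots> = (\<Sum>u\<le>d-j. mconst (real (d choose (j+u)) * ff (j+u) j) * X^(j+u) * (1-X)^(d-(j+u)))"
  proof -
    have "(\<lambda>u. u + j) ` {0..d-j} = {j..d}" using True by simp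
    then have "{j..d} = (\<lambda>u. j + u) ` {..d-j}" by (simp add: atLeast0AtMost add.commute)
    then show ?thesis by (simp add: sum.reindex)
  qed
  also have "\<dots> = (\<Sum>u\<le>d-j. mconst (ff d j) * X^j * (of_nat ((d - j) choose u) * X^u * (1-X)^((d-j)-u)))"
  proof (rule sum.cong[OF refl])
    fix u assume u: "u \<in> {..d-j}"
    then have "real (d choose (j+u)) * ff (j+u) j = ff d j * real ((d - j) choose u)"
      using True by (intro choose_ff) auto
    then have m: "mconst (real (d choose (j+u)) * ff (j+u) j) = mconst (ff d j) * of_nat ((d - j) choose u)"
      by (simp add: mconst_mult[symmetric] mconst_of_nat[symmetric])
    have "d - (j+u) = (d-j) - u" by simp
    then show "mconst (real (d choose (j+u)) * ff (j+u) j) * X^(j+u) * (1-X)^(d-(j+u))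
      = mconst (ff d j) * X^j * (of_nat ((d - j) choose u) * X^u * (1-X)^((d-j)-u))"
      unfolding m by (simp add: power_add mult_ac)
  qed
  also have "\<dots> = mconst (ff d j) * X^j * (X + (1 - X))^(d-j)"
    by (subst binomial_ring) (simp add: sum_distrib_left)
  finally show ?thesis by simp
qed

definition beta :: "nat \<Rightarrow> nat \<Rightarrow> nat \<Rightarrow> real" where
  "beta d a j = real (Stirling a j) * ff d j / real d ^ a"

lemma bern_uni:
  fixes X :: mpoly
  shows "(\<Sum>t\<le>d. mconst ((real t / real d)^a * real (d choose t)) * X^t * (1-X)^(d-t))
       = (\<Sum>j\<le>a. mconst (beta d a j) * X^j)"
proof -
  have "(\<Sum>t\<le>d. mconst ((real t / real d)^a * real (d choose t)) * X^t * (1-X)^(d-t))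
     = (\<Sum>t\<le>d. \<Sum>j\<le>a. mconst (real (Stirling a j) / real d ^ a) * (mconst (real (d choose t) * ff t j) * X^t * (1-X)^(d-t)))"
  proof (rule sum.cong[OF refl])
    fix t
    have eqt: "(real t / real d)^a * real (d choose t) = (\<Sum>j\<le>a. (real (Stirling a j) / real d ^ a) * (real (d choose t) * ff t j))"
      unfolding power_divide stirling_power[of t a] sum_divide_distrib sum_distrib_right by (rule sum.cong) auto
    show "mconst ((real t / real d)^a * real (d choose t)) * X^t * (1-X)^(d-t) =
      (\<Sum>j\<le>a. mconst (real (Stirling a j) / real d ^ a) * (mconst (real (d choose t) * ff t j) * X^t * (1-X)^(d-t)))"
      unfolding eqt mconst_sum sum_distrib_right
      by (rule sum.cong[OF refl]) (simp only: mconst_mult[symmetric] mult.assoc)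
  qed
  also have "\<dots> = (\<Sum>j\<le>a. mconst (real (Stirling a j) / real d ^ a) * (\<Sum>t\<le>d. mconst (real (d choose t) * ff t j) * X^t * (1-X)^(d-t)))"
    by (subst sum.swap) (simp add: sum_distrib_left)
  also have "\<dots> = (\<Sum>j\<le>a. mconst (beta d a j) * X^j)"
    by (simp add: bern_ff beta_def mult.assoc[symmetric] mconst_mult)
  finally show ?thesis .
qed

lemma beta_nonneg: "beta d a j \<ge> 0"
  unfolding beta_def by (simp add: ff_nonneg)

lemma beta_sum: "d \<ge> 1 \<Longrightarrow> (\<Sum>j\<le>a. beta d a j) = 1"
proof -
  assume d: "d \<ge> 1"
  have "(\<Sum>j\<le>a. beta d a j) = (\<Sum>j\<le>a. real (Stirling a j) * ff d j) / real d ^ a"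
    unfolding beta_def by (simp add: sum_divide_distrib)
  also have "\<dots> = real d ^ a / real d ^ a" by (simp only: stirling_power[of d a])
  also have "\<dots> = 1" using d by simp
  finally show ?thesis .
qed

lemma beta_diag: "beta d a a = ff d a / real d ^ a"
  unfolding beta_def by simp



lemma BM:
  assumes k: "Poly_Mapping.keys k \<subseteq> {..<n}"
  shows "(\<Sum>\<kappa>\<in>PiE {..<n} (\<lambda>_. {..d}).
      mconst (mon (\<lambda>i. if i < n then real (\<kappa> i) / real d else 0) k) *
      (\<Prod>i<n. mconst (real (d choose \<kappa> i)) * mvar i ^ \<kappa> i * (1 - mvar i) ^ (d - \<kappa> i)))
   = (\<Sum>J\<in>PiE {..<n} (\<lambda>i. {..Poly_Mapping.lookup k i}).
        mconst (\<Prod>i<n. beta d (Poly_Mapping.lookup k i) (J i)) * Pm n J)"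
proof -
  define e where "e = Poly_Mapping.lookup k"
  define F where "F i t = mconst ((real t / real d) ^ e i * real (d choose t)) * mvar i ^ t * (1 - mvar i) ^ (d - t)" for i t
  have tm: "mconst (mon (\<lambda>i. if i < n then real (\<kappa> i) / real d else 0) k) *
      (\<Prod>i<n. mconst (real (d choose \<kappa> i)) * mvar i ^ \<kappa> i * (1 - mvar i) ^ (d - \<kappa> i))
     = (\<Prod>i<n. F i (\<kappa> i))" for \<kappa>
  proof -
    have "mon (\<lambda>i. if i < n then real (\<kappa> i) / real d else 0) k = (\<Prod>i<n. (real (\<kappa> i) / real d) ^ e i)"
      unfolding e_def by (subst mon_superset[OF _ k]) auto
    then show ?thesis
      unfolding F_def by (simp add: mconst_prod prod.distrib[symmetric] mconst_mult[symmetric] mult.assoc)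
  qed
  have "(\<Sum>\<kappa>\<in>PiE {..<n} (\<lambda>_. {..d}). \<Prod>i<n. F i (\<kappa> i)) = (\<Prod>i<n. \<Sum>t\<le>d. F i t)"
    by (rule prod_sum_PiE[symmetric]) auto
  also have "\<dots> = (\<Prod>i<n. \<Sum>j\<le>e i. mconst (beta d (e i) j) * mvar i ^ j)"
    unfolding F_def by (simp add: bern_uni)
  also have "\<dots> = (\<Sum>J\<in>PiE {..<n} (\<lambda>i. {..e i}). \<Prod>i<n. mconst (beta d (e i) (J i)) * mvar i ^ J i)"
    by (rule prod_sum_PiE) auto
  also have "\<dots> = (\<Sum>J\<in>PiE {..<n} (\<lambda>i. {..e i}). mconst (\<Prod>i<n. beta d (e i) (J i)) * Pm n J)"
    unfolding Pm_def by (simp add: mconst_prod prod.distrib)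
  finally show ?thesis unfolding tm e_def .
qed

lemma core:
  assumes Ccert: "\<And>j. j \<ge> 1 \<Longrightarrow> (\<Prod>i<j. mvar i) + mconst (C j) \<in> Q j (2 * ((j + 1) div 2))"
    and fin: "finite A" and E0: "E0 \<in> A" and wnn: "\<And>J. J \<in> A \<Longrightarrow> w J \<ge> 0"
    and wsum: "(\<Sum>J\<in>A. w J) = 1" and deg: "\<And>J. J \<in> A \<Longrightarrow> edeg n J \<le> m"
  shows "mconst c * (Pm n E0 - (\<Sum>J\<in>A. mconst (w J) * Pm n J))
     + mconst (\<bar>c\<bar> * (1 - w E0) * (1 + (\<Sum>i=1..m. C i))) \<in> Q n (2 * ((m+1) div 2))"
proof -
  let ?r = "2 * ((m+1) div 2)" and ?Cp = "\<Sum>i=1..m. C i"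
  let ?A = "A - {E0}"
  define W where "W = (\<Sum>J\<in>?A. w J)"
  define S where "S = (\<Sum>J\<in>?A. mconst (w J) * Pm n J)"
  have W: "W = 1 - w E0" unfolding W_def using wsum sum.remove[OF fin E0, of w] by simp
  have W0: "W \<ge> 0" unfolding W_def using wnn by (intro sum_nonneg) auto
  have SA: "(\<Sum>J\<in>A. mconst (w J) * Pm n J) = mconst (w E0) * Pm n E0 + S"
    unfolding S_def by (rule sum.remove[OF fin E0])
  have main: "Pm n E0 - (\<Sum>J\<in>A. mconst (w J) * Pm n J) = mconst W * Pm n E0 - S"
    unfolding SA W mconst_diff by (simp add: algebra_simps)
  have degE0: "edeg n E0 \<le> m" using deg E0 .
  show ?thesis
  proof (cases "c \<ge> 0")
    case True
    have T1: "mconst (c * W) * (Pm n E0 + mconst ?Cp) \<in> Q n ?r"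
      using True W0 by (intro Q_scale plus_cert[OF Ccert degE0]) auto
    have T2: "(\<Sum>J\<in>?A. mconst (c * w J) * (1 - Pm n J)) \<in> Q n ?r"
      using True wnn deg by (intro Q_sum Q_scale minus_cert) auto
    have T2e: "(\<Sum>J\<in>?A. mconst (c * w J) * (1 - Pm n J)) = mconst c * mconst W - mconst c * S"
      unfolding W_def S_def by (simp add: mconst_sum sum_distrib_left mconst_mult[symmetric] algebra_simps sum_subtractf)
    have "mconst c * (Pm n E0 - (\<Sum>J\<in>A. mconst (w J) * Pm n J)) + mconst (\<bar>c\<bar> * (1 - w E0) * (1 + ?Cp))
      = mconst (c * W) * (Pm n E0 + mconst ?Cp) + (\<Sum>J\<in>?A. mconst (c * w J) * (1 - Pm n J))"
      unfolding main T2e W[symmetric] using True by (simp add: mconst_mult[symmetric] mconst_add algebra_simps)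
    then show ?thesis using T1 T2 by (simp add: Q_add)
  next
    case False
    define a where "a = - c"
    have a0: "a \<ge> 0" using False unfolding a_def by simp
    have T1: "mconst (a * W) * (1 - Pm n E0) \<in> Q n ?r"
      using a0 W0 by (intro Q_scale minus_cert[OF degE0]) auto
    have T2: "(\<Sum>J\<in>?A. mconst (a * w J) * (Pm n J + mconst ?Cp)) \<in> Q n ?r"
      using a0 wnn deg by (intro Q_sum Q_scale plus_cert[OF Ccert]) auto
    have T2e: "(\<Sum>J\<in>?A. mconst (a * w J) * (Pm n J + mconst ?Cp)) = mconst a * S + mconst a * mconst W * mconst ?Cp"
      unfolding W_def S_def by (simp add: mconst_sum sum_distrib_left sum_distrib_right mconst_mult[symmetric] algebra_simps sum.distrib)
    have cabs: "\<bar>c\<bar> = a" "c = - a" using False unfolding a_def by auto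
    have "mconst c * (Pm n E0 - (\<Sum>J\<in>A. mconst (w J) * Pm n J)) + mconst (\<bar>c\<bar> * (1 - w E0) * (1 + ?Cp))
      = mconst (a * W) * (1 - Pm n E0) + (\<Sum>J\<in>?A. mconst (a * w J) * (Pm n J + mconst ?Cp))"
      unfolding main T2e W[symmetric] cabs by (simp add: mconst_mult[symmetric] mconst_add mconst_uminus algebra_simps abs_of_nonneg[OF a0])
    then show ?thesis using T1 T2 by (simp add: Q_add)
  qed
qed



lemma choose2_real: "real (a choose 2) = real a * (real a - 1) / 2"
proof (induction a)
  case (Suc a)
  have "Suc a choose 2 = (a choose 2) + a" using binomial_Suc_Suc[of a 1] by (simp add: numeral_2_eq_2)
  then show ?case using Suc by (simp add: field_simps)
qed (simp)

lemma sum_lt_choose2: "real (\<Sum>l<a. l) = real (a choose 2)"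
  by (induction a) (auto simp: choose2_real field_simps)

lemma choose2_superadd: "finite I \<Longrightarrow> (\<Sum>i\<in>I. real (e i choose 2)) \<le> real ((\<Sum>i\<in>I. e i) choose 2)"
proof (induction I rule: finite_induct)
  case (insert a F)
  have "real (e a choose 2) + real ((\<Sum>i\<in>F. e i) choose 2) \<le> real ((e a + (\<Sum>i\<in>F. e i)) choose 2)"
    unfolding choose2_real by (simp add: field_simps) (simp add: sum_nonneg)
  then show ?case using insert by simp
qed simp

lemma prod_lower:
  fixes x u :: "'a \<Rightarrow> real"
  assumes "finite I" "\<And>i. i \<in> I \<Longrightarrow> 0 \<le> x i \<and> x i \<le> 1 \<and> 1 - u i \<le> x i \<and> 0 \<le> u i"
  shows "1 - sum u I \<le> prod x I \<and> 0 \<le> prod x I \<and> prod x I \<le> 1 \<and> 0 \<le> sum u I"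
  using assms
proof (induction I rule: finite_induct)
  case empty then show ?case by simp
next
  case (insert a F)
  then have IH: "1 - sum u F \<le> prod x F" "0 \<le> prod x F" "prod x F \<le> 1" "0 \<le> sum u F" by auto
  have xa: "0 \<le> x a" "x a \<le> 1" "1 - u a \<le> x a" "0 \<le> u a" using insert.prems by auto
  have "1 - u a - sum u F \<le> x a * prod x F"
  proof (cases "1 - sum u F \<ge> 0")
    case True
    have "(1 - u a) * (1 - sum u F) \<le> x a * prod x F"
    proof (cases "1 - u a \<ge> 0")
      case True
      then show ?thesis using mult_mono[OF xa(3) IH(1) xa(1) \<open>0 \<le> 1 - sum u F\<close>] by simp
    next
      case False
      then have "(1 - u a) * (1 - sum u F) \<le> 0" using \<open>0 \<le> 1 - sum u F\<close> by (simp add: mult_nonpos_nonneg)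
      also have "0 \<le> x a * prod x F" using xa IH by simp
      finally show ?thesis .
    qed
    moreover have "1 - u a - sum u F \<le> (1 - u a) * (1 - sum u F)"
      using xa IH by (simp add: algebra_simps)
    ultimately show ?thesis by linarith
  next
    case False
    then show ?thesis using xa IH by (smt (verit) mult_nonneg_nonneg)
  qed
  moreover have "x a * prod x F \<le> 1" using xa IH mult_le_one by blast
  ultimately show ?case using insert xa IH by simp
qed

lemma ff_ratio:
  assumes d: "d \<ge> 1"
  shows "0 \<le> ff d a / real d ^ a \<and> ff d a / real d ^ a \<le> 1 \<and> 1 - real (a choose 2) / real d \<le> ff d a / real d ^ a"
proof (cases "a \<le> d")
  case True
  have "ff d a / real d ^ a = (\<Prod>l<a. (real d - real l) / real d)"
    unfolding ff_def prod_dividef by simp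
  also have "\<dots> = (\<Prod>l<a. 1 - real l / real d)" using d by (intro prod.cong) (auto simp: field_simps)
  finally have eq: "ff d a / real d ^ a = (\<Prod>l<a. 1 - real l / real d)" .
  have "1 - (\<Sum>l<a. real l / real d) \<le> (\<Prod>l<a. 1 - real l / real d) \<and> 0 \<le> (\<Prod>l<a. 1 - real l / real d)
      \<and> (\<Prod>l<a. 1 - real l / real d) \<le> 1 \<and> 0 \<le> (\<Sum>l<a. real l / real d)"
    by (rule prod_lower) (use True d in auto)
  moreover have "(\<Sum>l<a. real l / real d) = real (a choose 2) / real d"
    using sum_lt_choose2[of a] by (simp add: sum_divide_distrib[symmetric])
  ultimately show ?thesis unfolding eq by simp
next
  case False
  then have z: "ff d a = 0" by (simp add: ff_zero)
  have "real d \<le> real (a choose 2)"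
  proof -
    have "real a \<ge> real d + 1" using False by simp
    then have "real a * (real a - 1) \<ge> (real d + 1) * real d" using d
      by (intro mult_mono) auto
    moreover have "real d * 1 \<le> real d * real d" by (rule mult_left_mono) (use d in auto)
    then have "real d * 2 \<le> (real d + 1) * real d" by (simp add: algebra_simps)
    ultimately have "real d * 2 \<le> real a * (real a - 1)" by linarith
    then show ?thesis unfolding choose2_real by simp
  qed
  then show ?thesis using z d by simp
qed

lemma one_minus_w:
  assumes d: "d \<ge> 1"
  shows "1 - (\<Prod>i<n. beta d (e i) (e i)) \<le> real (edeg n e choose 2) / real d"
proof -
  have "1 - (\<Sum>i<n. real (e i choose 2) / real d) \<le> (\<Prod>i<n. beta d (e i) (e i)) \<and> 0 \<le> (\<Prod>i<n. beta d (e i) (e i))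
     \<and> (\<Prod>i<n. beta d (e i) (e i)) \<le> 1 \<and> 0 \<le> (\<Sum>i<n. real (e i choose 2) / real d)"
    by (rule prod_lower) (use ff_ratio[OF d] d in \<open>auto simp: beta_diag\<close>)
  moreover have "(\<Sum>i<n. real (e i choose 2) / real d) \<le> real (edeg n e choose 2) / real d"
    unfolding sum_divide_distrib[symmetric] edeg_def using d
    by (intro divide_right_mono choose2_superadd) auto
  ultimately show ?thesis by linarith
qed

definition mf :: "nat \<Rightarrow> (nat \<Rightarrow> nat) \<Rightarrow> real" where "mf n e = (\<Prod>i<n. fact (e i))"

lemma mf_pos: "mf n e > 0" unfolding mf_def by (intro prod_pos) auto

lemma mf_dec: assumes "i < n" "e i > 0" shows "mf n e = real (e i) * mf n (e(i := e i - 1))"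
proof -
  have "mf n e = fact (e i) * (\<Prod>l\<in>{..<n}-{i}. fact (e l))"
    unfolding mf_def using assms(1) by (simp add: prod.remove)
  moreover have "mf n (e(i := e i - 1)) = fact (e i - 1) * (\<Prod>l\<in>{..<n}-{i}. fact (e l))"
    unfolding mf_def using assms(1) by (simp add: prod.remove)
  moreover have "fact (e i) = real (e i) * fact (e i - 1)"
    using assms(2) by (metis Suc_diff_1 fact_Suc of_nat_Suc)
  ultimately show ?thesis by simp
qed

lemma multinomial_le:
  "finite E \<Longrightarrow> (\<And>e. e \<in> E \<Longrightarrow> (\<forall>i\<ge>n. e i = 0) \<and> edeg n e = j) \<Longrightarrow>
    (\<Sum>e\<in>E. fact j / mf n e) \<le> real n ^ j"
proof (induction j arbitrary: E)
  case 0
  have "E \<subseteq> {\<lambda>_. 0}"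
  proof
    fix e assume "e \<in> E"
    then have "\<forall>i\<ge>n. e i = 0" "\<forall>i<n. e i = 0" using 0 by (auto simp: edeg_def)
    then have "\<forall>i. e i = 0" by (metis not_le)
    then show "e \<in> {\<lambda>_. 0}" by auto
  qed
  then have "card E \<le> 1" using card_mono[OF _ \<open>E \<subseteq> {\<lambda>_. 0}\<close>] by simp
  moreover have "\<forall>e\<in>E. fact 0 / mf n e = 1" using 0 \<open>E \<subseteq> _\<close> by (auto simp: mf_def)
  ultimately show ?case by simp
next
  case (Suc j)
  define upd where "upd i e = e(i := e i - 1)" for i and e :: "nat \<Rightarrow> nat"
  define Ei where "Ei i = {e \<in> E. e i > 0}" for i
  have step: "fact (Suc j) / mf n e = (\<Sum>i<n. if e i > 0 then fact j / mf n (upd i e) else 0)" if "e \<in> E" for e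
  proof -
    have "(\<Sum>i<n. if e i > 0 then fact j / mf n (upd i e) else 0) = (\<Sum>i<n. real (e i) * (fact j / mf n e))"
    proof (rule sum.cong[OF refl])
      fix i assume "i \<in> {..<n}"
      then have i: "i < n" by simp
      show "(if e i > 0 then fact j / mf n (upd i e) else 0) = real (e i) * (fact j / mf n e)"
      proof (cases "e i > 0")
        case True
        have "mf n e = real (e i) * mf n (upd i e)" using mf_dec[of i n e] True i by (simp add: upd_def)
        then show ?thesis using True mf_pos[of n "upd i e"] by (simp add: field_simps)
      qed simp
    qed
    also have "\<dots> = real (edeg n e) * (fact j / mf n e)"
      unfolding edeg_def of_nat_sum sum_distrib_right by simp
    also have "\<dots> = fact (Suc j) / mf n e" using Suc.prems(2)[OF that] by simp
    finally show ?thesis by simp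
  qed
  have "(\<Sum>e\<in>E. fact (Suc j) / mf n e) = (\<Sum>e\<in>E. \<Sum>i<n. if e i > 0 then fact j / mf n (upd i e) else 0)"
    using step by (intro sum.cong) auto
  also have "\<dots> = (\<Sum>i<n. \<Sum>e\<in>E. if e i > 0 then fact j / mf n (upd i e) else 0)"
    by (rule sum.swap)
  also have "\<dots> = (\<Sum>i<n. \<Sum>e\<in>Ei i. fact j / mf n (upd i e))"
    unfolding Ei_def by (simp add: sum.inter_filter Suc.prems(1))
  also have "\<dots> \<le> (\<Sum>i<n. real n ^ j)"
  proof (rule sum_mono)
    fix i assume i: "i \<in> {..<n}"
    have inj: "inj_on (upd i) (Ei i)"
    proof (rule inj_onI)
      fix x y assume "x \<in> Ei i" "y \<in> Ei i" "upd i x = upd i y"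
      note xy = this
      have "x l = y l" for l
      proof -
        from xy(3) have "upd i x l = upd i y l" by simp
        then show ?thesis using xy(1,2) by (cases "l = i") (auto simp: upd_def Ei_def)
      qed
      then show "x = y" by auto
    qed
    have "(\<Sum>e\<in>Ei i. fact j / mf n (upd i e)) = (\<Sum>e\<in>upd i ` Ei i. fact j / mf n e)"
      by (simp add: sum.reindex[OF inj] o_def)
    also have "\<dots> \<le> real n ^ j"
    proof (rule Suc.IH)
      show "finite (upd i ` Ei i)" unfolding Ei_def using Suc.prems(1) by simp
      fix e' assume "e' \<in> upd i ` Ei i"
      then obtain e where e: "e \<in> E" "e i > 0" "e' = upd i e" unfolding Ei_def by auto
      then have "edeg n e' = edeg n e - 1" using edeg_dec[of i n e] i by (simp add: upd_def)
      then show "(\<forall>l\<ge>n. e' l = 0) \<and> edeg n e' = j" using Suc.prems(2)[OF e(1)] e i by (auto simp: upd_def)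
    qed
    finally show "(\<Sum>e\<in>Ei i. fact j / mf n (upd i e)) \<le> real n ^ j" .
  qed
  also have "\<dots> = real n ^ Suc j" by simp
  finally show ?case .
qed



lemma mon_deg_edeg: "Poly_Mapping.keys k \<subseteq> {..<n} \<Longrightarrow> mon_deg k = edeg n (Poly_Mapping.lookup k)"
  unfolding edeg_def by (rule mon_deg_superset) auto

lemma mon_fact_mf: "Poly_Mapping.keys k \<subseteq> {..<n} \<Longrightarrow> mon_fact k = mf n (Poly_Mapping.lookup k)"
  unfolding mon_fact_def mf_def by (rule prod.mono_neutral_left) (auto simp: in_keys_iff)

lemma mon_mvar_Pm: "Poly_Mapping.keys k \<subseteq> {..<n} \<Longrightarrow> mon mvar k = Pm n (Poly_Mapping.lookup k)"
  unfolding Pm_def by (rule mon_superset) auto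

lemma mon_fact_pos: "mon_fact k > 0"
  unfolding mon_fact_def by (intro prod_pos) auto

lemma Lnorm_nonneg: "0 \<le> Lnorm p"
  unfolding Lnorm_def by (rule Max_ge) auto

lemma Lnorm_bound: assumes "k \<in> Poly_Mapping.keys p"
  shows "\<bar>Poly_Mapping.lookup p k\<bar> \<le> Lnorm p * fact (mon_deg k) / mon_fact k"
proof -
  have "\<bar>Poly_Mapping.lookup p k\<bar> * mon_fact k / fact (mon_deg k) \<le> Lnorm p"
    unfolding Lnorm_def by (rule Max_ge) (use assms in auto)
  then show ?thesis using mon_fact_pos[of k] by (simp add: field_simps)
qed

lemma sum_bound:
  assumes fin: "finite K" and K: "\<And>k. k \<in> K \<Longrightarrow> Poly_Mapping.keys k \<subseteq> {..<n} \<and> mon_deg k \<le> m"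
    and n: "n \<ge> 1"
  shows "(\<Sum>k\<in>K. real (mon_deg k choose 2) * (fact (mon_deg k) / mon_fact k)) \<le> real ((m+1) choose 3) * real n ^ m"
proof -
  let ?f = "\<lambda>k. real (mon_deg k choose 2) * (fact (mon_deg k) / mon_fact k)"
  have "(\<Sum>k\<in>K. ?f k) = (\<Sum>j\<le>m. \<Sum>k\<in>{k\<in>K. mon_deg k = j}. ?f k)"
    by (rule sum.group[symmetric]) (use fin K in auto)
  also have "\<dots> = (\<Sum>j\<le>m. real (j choose 2) * (\<Sum>k\<in>{k\<in>K. mon_deg k = j}. fact j / mon_fact k))"
    by (intro sum.cong refl) (auto simp: sum_distrib_left)
  also have "\<dots> \<le> (\<Sum>j\<le>m. real (j choose 2) * real n ^ m)"
  proof (intro sum_mono mult_left_mono)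
    fix j assume j: "j \<in> {..m}"
    let ?Kj = "{k\<in>K. mon_deg k = j}"
    have inj: "inj_on Poly_Mapping.lookup ?Kj" by (rule inj_onI) (simp add: poly_mapping_eqI)
    have "(\<Sum>k\<in>?Kj. fact j / mon_fact k) = (\<Sum>k\<in>?Kj. fact j / mf n (Poly_Mapping.lookup k))"
      using K by (intro sum.cong refl) (auto simp: mon_fact_mf)
    also have "\<dots> = (\<Sum>e\<in>Poly_Mapping.lookup ` ?Kj. fact j / mf n e)"
      by (simp add: sum.reindex[OF inj] o_def)
    also have "\<dots> \<le> real n ^ j"
    proof (rule multinomial_le)
      show "finite (Poly_Mapping.lookup ` ?Kj)" using fin by simp
      fix e assume "e \<in> Poly_Mapping.lookup ` ?Kj"
      then obtain k where k: "k \<in> K" "mon_deg k = j" "e = Poly_Mapping.lookup k" by auto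
      have "\<forall>i\<ge>n. e i = 0" using K[OF k(1)] k(3) by (metis in_keys_iff lessThan_iff not_le subsetD)
      moreover have "edeg n e = j" using mon_deg_edeg[of k n] K[OF k(1)] k by simp
      ultimately show "(\<forall>i\<ge>n. e i = 0) \<and> edeg n e = j" by simp
    qed
    also have "\<dots> \<le> real n ^ m" using j n by (intro power_increasing) auto
    finally show "(\<Sum>k\<in>?Kj. fact j / mon_fact k) \<le> real n ^ m" .
  qed simp
  also have "\<dots> = real ((m+1) choose 3) * real n ^ m"
  proof -
    have "(\<Sum>j\<le>m. j choose 2) = Suc m choose Suc 2" by (rule sum_choose_upper)
    then have "(\<Sum>j\<le>m. real (j choose 2)) = real ((m+1) choose 3)"
      by (metis Suc_eq_plus1 numeral_2_eq_2 numeral_3_eq_3 of_nat_sum)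
    then show ?thesis by (simp add: sum_distrib_right[symmetric])
  qed
  finally show ?thesis .
qed



theorem theorem6:
  fixes C :: "nat \<Rightarrow> real" and n m d :: nat and p :: mpoly
  assumes C1: "C 1 = 0"
    and C_le: "\<And>j. j \<ge> 1 \<Longrightarrow> C j \<le> 1"
    and C_cert: "\<And>j. j \<ge> 1 \<Longrightarrow>
        (\<Prod>i<j. mvar i) + mconst (C j) \<in> qmodule j (2 * ((j + 1) div 2)) gbox"
    and n_pos: "n \<ge> 1"
    and p_vars: "in_vars n p"
    and p_deg: "mdegree p \<le> m"
    and d_pos: "d \<ge> 1"
  shows "p - bernstein n d p
           + mconst ((1 + (\<Sum>i=1..m. C i) + C m) * (Lnorm p / real d)
                     * real ((m + 1) choose 3) * real n ^ m)
         \<in> qmodule n (2 * ((m + 1) div 2)) gbox"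
proof -
  let ?r = "2 * ((m + 1) div 2)"
  let ?Cp = "\<Sum>i=1..m. C i"
  let ?K = "Poly_Mapping.keys p"
  let ?Kc = "(1 + ?Cp + C m) * (Lnorm p / real d) * real ((m + 1) choose 3) * real n ^ m"
  have Cnn: "C j \<ge> 0" if "j \<ge> 1" for j using C_nonneg[OF C_cert[OF that] that] .
  have Cp0: "?Cp \<ge> 0" by (intro sum_nonneg) (auto intro: Cnn)
  have kv: "Poly_Mapping.keys k \<subseteq> {..<n}" if "k \<in> ?K" for k
    using p_vars that unfolding in_vars_def by blast
  have kd: "mon_deg k \<le> m" if "k \<in> ?K" for k
    using p_deg that unfolding mdegree_le_iff dle_def by blast
  define c where "c k = Poly_Mapping.lookup p k" for k
  define e where "e k = Poly_Mapping.lookup k" for k :: "nat \<Rightarrow>\<^sub>0 nat"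
  define A where "A k = PiE {..<n} (\<lambda>i. {..e k i})" for k
  define w where "w k J = (\<Prod>i<n. beta d (e k i) (J i))" for k J
  define B where "B k = (\<Sum>J\<in>A k. mconst (w k J) * Pm n J)" for k
  define T where "T k = \<bar>c k\<bar> * (1 - (\<Prod>i<n. beta d (e k i) (e k i))) * (1 + ?Cp)" for k
  have pexp: "p = (\<Sum>k\<in>?K. mconst (c k) * Pm n (e k))"
  proof -
    have "p = gev mconst mvar p" by (rule gev_id[symmetric])
    also have "\<dots> = (\<Sum>k\<in>?K. mconst (c k) * Pm n (e k))"
      unfolding gev_def c_def e_def by (intro sum.cong refl) (simp add: mon_mvar_Pm kv)
    finally show ?thesis .
  qed
  have bexp: "bernstein n d p = (\<Sum>k\<in>?K. mconst (c k) * B k)"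
  proof -
    define y where "y \<kappa> i = (if i < n then real (\<kappa> i) / real d else 0)" for \<kappa> :: "nat \<Rightarrow> nat" and i
    define PI where "PI \<kappa> = (\<Prod>i<n. mconst (real (d choose \<kappa> i)) * mvar i ^ \<kappa> i * (1 - mvar i) ^ (d - \<kappa> i))" for \<kappa>
    have "bernstein n d p = (\<Sum>\<kappa>\<in>PiE {..<n} (\<lambda>_. {..d}). mconst (meval p (y \<kappa>)) * PI \<kappa>)"
      unfolding bernstein_def y_def PI_def by simp
    also have "\<dots> = (\<Sum>\<kappa>\<in>PiE {..<n} (\<lambda>_. {..d}). \<Sum>k\<in>?K. mconst (c k) * (mconst (mon (y \<kappa>) k) * PI \<kappa>))"
      unfolding meval_gev gev_def c_def
      by (intro sum.cong refl) (simp add: mconst_sum sum_distrib_right mconst_mult[symmetric] mult.assoc)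
    also have "\<dots> = (\<Sum>k\<in>?K. \<Sum>\<kappa>\<in>PiE {..<n} (\<lambda>_. {..d}). mconst (c k) * (mconst (mon (y \<kappa>) k) * PI \<kappa>))"
      by (rule sum.swap)
    also have "\<dots> = (\<Sum>k\<in>?K. mconst (c k) * B k)"
    proof (intro sum.cong refl)
      fix k assume k: "k \<in> ?K"
      have eqB: "(\<Sum>\<kappa>\<in>PiE {..<n} (\<lambda>_. {..d}). mconst (mon (y \<kappa>) k) * PI \<kappa>) = B k"
        unfolding B_def A_def w_def e_def y_def PI_def by (rule BM[OF kv[OF k]])
      then show "(\<Sum>\<kappa>\<in>PiE {..<n} (\<lambda>_. {..d}). mconst (c k) * (mconst (mon (y \<kappa>) k) * PI \<kappa>)) = mconst (c k) * B k"
        unfolding eqB[symmetric] by (simp add: sum_distrib_left)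
    qed
    finally show ?thesis .
  qed
  have cert: "mconst (c k) * (Pm n (e k) - B k) + mconst (T k) \<in> Q n ?r" if k: "k \<in> ?K" for k
  proof -
    define E0 where "E0 = restrict (e k) {..<n}"
    have E0A: "E0 \<in> A k" unfolding E0_def A_def by auto
    have fin: "finite (A k)" unfolding A_def by (intro finite_PiE) auto
    have wnn: "w k J \<ge> 0" for J unfolding w_def by (intro prod_nonneg) (auto simp: beta_nonneg)
    have wsum: "(\<Sum>J\<in>A k. w k J) = 1"
    proof -
      have "(\<Sum>J\<in>A k. w k J) = (\<Prod>i<n. \<Sum>j\<le>e k i. beta d (e k i) j)"
        unfolding A_def w_def by (rule prod_sum_PiE[symmetric]) auto
      also have "\<dots> = 1" using d_pos by (simp add: beta_sum)
      finally show ?thesis .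
    qed
    have deg: "edeg n J \<le> m" if "J \<in> A k" for J
    proof -
      have "edeg n J \<le> edeg n (e k)" unfolding edeg_def using that unfolding A_def
        by (intro sum_mono) (auto simp: PiE_iff)
      also have "\<dots> = mon_deg k" unfolding e_def using mon_deg_edeg[OF kv[OF k]] by simp
      finally show ?thesis using kd[OF k] by simp
    qed
    have PE0: "Pm n E0 = Pm n (e k)" unfolding E0_def by (rule Pm_cong) simp
    have wE0: "w k E0 = (\<Prod>i<n. beta d (e k i) (e k i))" unfolding w_def E0_def by (intro prod.cong) auto
    have "mconst (c k) * (Pm n E0 - (\<Sum>J\<in>A k. mconst (w k J) * Pm n J))
     + mconst (\<bar>c k\<bar> * (1 - w k E0) * (1 + ?Cp)) \<in> Q n ?r"
      by (rule core[OF C_cert fin E0A wnn wsum deg])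
    then show ?thesis unfolding PE0 wE0 B_def T_def .
  qed
  have Tb: "T k \<le> (1 + ?Cp) * (Lnorm p / real d) * (real (mon_deg k choose 2) * (fact (mon_deg k) / mon_fact k))"
    if k: "k \<in> ?K" for k
  proof -
    have a: "1 - (\<Prod>i<n. beta d (e k i) (e k i)) \<le> real (mon_deg k choose 2) / real d"
      using one_minus_w[OF d_pos, where n=n and e="e k"] mon_deg_edeg[OF kv[OF k]] unfolding e_def by simp
    have b: "\<bar>c k\<bar> \<le> Lnorm p * fact (mon_deg k) / mon_fact k" unfolding c_def using Lnorm_bound[OF k] .
    have "\<bar>c k\<bar> * (1 - (\<Prod>i<n. beta d (e k i) (e k i))) \<le> \<bar>c k\<bar> * (real (mon_deg k choose 2) / real d)"
      using a by (intro mult_left_mono) auto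
    also have "\<dots> \<le> (Lnorm p * fact (mon_deg k) / mon_fact k) * (real (mon_deg k choose 2) / real d)"
      using b by (intro mult_right_mono) auto
    finally have "T k \<le> (Lnorm p * fact (mon_deg k) / mon_fact k) * (real (mon_deg k choose 2) / real d) * (1 + ?Cp)"
      unfolding T_def using Cp0 by (intro mult_right_mono) auto
    then show ?thesis by (simp add: field_simps)
  qed
  have Tsum: "(\<Sum>k\<in>?K. T k) \<le> (1 + ?Cp) * (Lnorm p / real d) * (real ((m+1) choose 3) * real n ^ m)"
  proof -
    have "(\<Sum>k\<in>?K. T k) \<le> (\<Sum>k\<in>?K. (1 + ?Cp) * (Lnorm p / real d) * (real (mon_deg k choose 2) * (fact (mon_deg k) / mon_fact k)))"
      by (rule sum_mono) (rule Tb)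
    also have "\<dots> = (1 + ?Cp) * (Lnorm p / real d) * (\<Sum>k\<in>?K. real (mon_deg k choose 2) * (fact (mon_deg k) / mon_fact k))"
      by (simp add: sum_distrib_left)
    also have "\<dots> \<le> (1 + ?Cp) * (Lnorm p / real d) * (real ((m+1) choose 3) * real n ^ m)"
      using Cp0 Lnorm_nonneg[of p] d_pos n_pos
      by (intro mult_left_mono sum_bound) (auto simp: kv kd n_pos)
    finally show ?thesis .
  qed
  have Kge: "(1 + ?Cp) * (Lnorm p / real d) * (real ((m+1) choose 3) * real n ^ m) \<le> ?Kc"
  proof (cases "m = 0")
    case True then show ?thesis by (simp add: binomial_eq_0)
  next
    case False
    then have "C m \<ge> 0" using Cnn by simp
    have X0: "0 \<le> Lnorm p / real d * (real ((m+1) choose 3) * real n ^ m)"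
      using Lnorm_nonneg[of p] by simp
    have "(1 + ?Cp) * (Lnorm p / real d * (real ((m+1) choose 3) * real n ^ m))
       \<le> (1 + ?Cp + C m) * (Lnorm p / real d * (real ((m+1) choose 3) * real n ^ m))"
      by (rule mult_right_mono) (use \<open>C m \<ge> 0\<close> X0 in auto)
    then show ?thesis by (simp add: mult.assoc)
  qed
  have eq1: "p - bernstein n d p = (\<Sum>k\<in>?K. mconst (c k) * (Pm n (e k) - B k))"
    unfolding bexp by (subst pexp) (simp add: sum_subtractf right_diff_distrib)
  have "p - bernstein n d p + mconst ?Kc =
      (\<Sum>k\<in>?K. mconst (c k) * (Pm n (e k) - B k) + mconst (T k)) + mconst (?Kc - (\<Sum>k\<in>?K. T k))"
    unfolding eq1 by (simp add: sum.distrib mconst_sum[symmetric] mconst_diff)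
  moreover have "(\<Sum>k\<in>?K. mconst (c k) * (Pm n (e k) - B k) + mconst (T k)) \<in> Q n ?r"
    by (rule Q_sum) (rule cert)
  moreover have "mconst (?Kc - (\<Sum>k\<in>?K. T k)) \<in> Q n ?r"
    using Tsum Kge by (intro Q_const) simp
  ultimately show ?thesis by (simp add: Q_add)
qed


end
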